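(* Let $R$ be a semiring, $f, g: N \to M$ homomorphisms of left $R$-semimodules, and let $\sim_{(f,g)}$ be the relation on $M$ defined by: $m \sim_{(f,g)} m'$ iff there exist $k\ge 1$, $m_1,\dots,m_k \in M$ and $n_1,\dots,n_k,n'_1,\dots,n'_k \in N$ with $m = m_1 + f(n_1) + g(n'_1)$, $m_i + f(n'_i) + g(n_i) = m_{i+1} + f(n_{i+1}) + g(n'_{i+1})$ for $1\le i\le k-1$, and $m_k + f(n'_k) + g(n_k) = m'$. Let $\nu: M \to M/{\sim_{(f,g)}}$ be the canonical map onto the quotient semimodule. Then $\nu$ is a coequalizer of $f$ and $g$, i.e. (1) $\nu \circ f = \nu \circ g$, and (2) for every left $R$-semimodule $P$ and every homomorphism $h: M \to P$ with $h \circ f = h \circ g$ there is a unique homomorphism $h': M/{\sim_{(f,g)}} \to P$ with $h' \circ \nu = h$.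
   Context: A semiring $R$ is a commutative monoid $(R,+,0)$ with an associative multiplication with unit $1$, distributive on both sides, and with $0r = 0 = r0$. A left $R$-semimodule is a commutative monoid $(M,+,0)$ with a map $R\times M \to M$ satisfying $(rr')m = r(r'm)$, $(r+r')m = rm + r'm$, $r(m+m') = rm + rm'$, $1m = m$, $0m = 0 = r0$; homomorphisms are additive maps with $f(rm)=rf(m)$. A congruence relation on $M$ is an equivalence relation $\sim$ with $m\sim m' \Rightarrow m+n\sim m'+n$ and $rm \sim rm'$; the relation $\sim_{(f,g)}$ is one, and the set $M/{\sim}$ of equivalence classes $\bar m$ is a left $R$-semimodule via $\bar m + \bar m' = \overline{m+m'}$, $r\bar m = \overline{rm}$, with $\nu(m) = \bar m$ a homomorphism. *)

theory Defs
  imports Main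
begin

text \<open>Semirings are rendered by the type class constraint semiring_0 plus monoid_mult
(commutative additive monoid, associative multiplication with unit, distributivity,
absorbing zero; no assumption 0 \<noteq> 1).\<close>

record ('r, 'a) semimod =
  carrier :: "'a set"
  add :: "'a \<Rightarrow> 'a \<Rightarrow> 'a"
  zero :: "'a"
  smul :: "'r \<Rightarrow> 'a \<Rightarrow> 'a"

definition semimodule :: "('r::{semiring_0, monoid_mult}, 'a) semimod \<Rightarrow> bool" where
  "semimodule M \<longleftrightarrow>
     zero M \<in> carrier M \<and>
     (\<forall>x\<in>carrier M. \<forall>y\<in>carrier M. add M x y \<in> carrier M) \<and>
     (\<forall>r. \<forall>x\<in>carrier M. smul M r x \<in> carrier M) \<and>
     (\<forall>x\<in>carrier M. \<forall>y\<in>carrier M. \<forall>z\<in>carrier M. add M (add M x y) z = add M x (add M y z)) \<and>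
     (\<forall>x\<in>carrier M. \<forall>y\<in>carrier M. add M x y = add M y x) \<and>
     (\<forall>x\<in>carrier M. add M (zero M) x = x) \<and>
     (\<forall>r r'. \<forall>x\<in>carrier M. smul M (r * r') x = smul M r (smul M r' x)) \<and>
     (\<forall>r r'. \<forall>x\<in>carrier M. smul M (r + r') x = add M (smul M r x) (smul M r' x)) \<and>
     (\<forall>r. \<forall>x\<in>carrier M. \<forall>y\<in>carrier M. smul M r (add M x y) = add M (smul M r x) (smul M r y)) \<and>
     (\<forall>x\<in>carrier M. smul M 1 x = x) \<and>
     (\<forall>x\<in>carrier M. smul M 0 x = zero M) \<and>
     (\<forall>r. smul M r (zero M) = zero M)"

definition semimod_hom ::
  "('r::{semiring_0, monoid_mult}, 'a) semimod \<Rightarrow> ('r, 'b) semimod \<Rightarrow> ('a \<Rightarrow> 'b) \<Rightarrow> bool" where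
  "semimod_hom M P h \<longleftrightarrow>
     (\<forall>x\<in>carrier M. h x \<in> carrier P) \<and>
     (\<forall>x\<in>carrier M. \<forall>y\<in>carrier M. h (add M x y) = add P (h x) (h y)) \<and>
     (\<forall>r. \<forall>x\<in>carrier M. h (smul M r x) = smul P r (h x))"

definition fg_rel ::
  "('r::{semiring_0, monoid_mult}, 'n) semimod \<Rightarrow> ('r, 'm) semimod \<Rightarrow> ('n \<Rightarrow> 'm) \<Rightarrow> ('n \<Rightarrow> 'm)
     \<Rightarrow> ('m \<times> 'm) set" where
  "fg_rel N M f g = {(m, m'). m \<in> carrier M \<and> m' \<in> carrier M \<and>
     (\<exists>k::nat. k \<ge> 1 \<and> (\<exists>ms ns ns'.
        (\<forall>i\<in>{1..k}. ms i \<in> carrier M \<and> ns i \<in> carrier N \<and> ns' i \<in> carrier N) \<and>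
        m = add M (add M (ms 1) (f (ns 1))) (g (ns' 1)) \<and>
        (\<forall>i\<in>{1..k-1}. add M (add M (ms i) (f (ns' i))) (g (ns i)) =
                        add M (add M (ms (i+1)) (f (ns (i+1)))) (g (ns' (i+1)))) \<and>
        add M (add M (ms k) (f (ns' k))) (g (ns k)) = m'))}"

definition quot_semimod ::
  "('r::{semiring_0, monoid_mult}, 'm) semimod \<Rightarrow> ('m \<times> 'm) set \<Rightarrow> ('r, 'm set) semimod" where
  "quot_semimod M rel =
     \<lparr> carrier = carrier M // rel,
       add = (\<lambda>X Y. SOME Z. \<exists>x\<in>X. \<exists>y\<in>Y. Z = rel `` {add M x y}),
       zero = rel `` {zero M},
       smul = (\<lambda>r X. SOME Z. \<exists>x\<in>X. Z = rel `` {smul M r x}) \<rparr>"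

definition quot_map :: "('m \<times> 'm) set \<Rightarrow> 'm \<Rightarrow> 'm set" where
  "quot_map rel m = rel `` {m}"

end

theory Submission imports Defs begin

context
  fixes M :: "('r::{semiring_0, monoid_mult}, 'a) semimod"
  assumes sm: "semimodule M"
begin
lemma sm_zero: "zero M \<in> carrier M" using sm unfolding semimodule_def by auto
lemma sm_add: "x \<in> carrier M \<Longrightarrow> y \<in> carrier M \<Longrightarrow> add M x y \<in> carrier M" using sm unfolding semimodule_def by auto
lemma sm_smul: "x \<in> carrier M \<Longrightarrow> smul M r x \<in> carrier M" using sm unfolding semimodule_def by auto
lemma sm_assoc: "x \<in> carrier M \<Longrightarrow> y \<in> carrier M \<Longrightarrow> z \<in> carrier M \<Longrightarrow> add M (add M x y) z = add M x (add M y z)" using sm unfolding semimodule_def by auto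
lemma sm_comm: "x \<in> carrier M \<Longrightarrow> y \<in> carrier M \<Longrightarrow> add M x y = add M y x" using sm unfolding semimodule_def by auto
lemma sm_lzero: "x \<in> carrier M \<Longrightarrow> add M (zero M) x = x" using sm unfolding semimodule_def by auto
lemma sm_rzero: "x \<in> carrier M \<Longrightarrow> add M x (zero M) = x" using sm_lzero sm_comm sm_zero by metis
lemma sm_mult: "x \<in> carrier M \<Longrightarrow> smul M (r * r') x = smul M r (smul M r' x)" using sm unfolding semimodule_def by auto
lemma sm_distr1: "x \<in> carrier M \<Longrightarrow> smul M (r + r') x = add M (smul M r x) (smul M r' x)" using sm unfolding semimodule_def by auto
lemma sm_distr2: "x \<in> carrier M \<Longrightarrow> y \<in> carrier M \<Longrightarrow> smul M r (add M x y) = add M (smul M r x) (smul M r y)" using sm unfolding semimodule_def by auto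
lemma sm_one: "x \<in> carrier M \<Longrightarrow> smul M 1 x = x" using sm unfolding semimodule_def by auto
lemma sm_szero: "x \<in> carrier M \<Longrightarrow> smul M 0 x = zero M" using sm unfolding semimodule_def by auto
lemma sm_zeros: "smul M r (zero M) = zero M" using sm unfolding semimodule_def by auto
lemma sm_swap: "a \<in> carrier M \<Longrightarrow> b \<in> carrier M \<Longrightarrow> c \<in> carrier M \<Longrightarrow>
   add M (add M a b) c = add M (add M a c) b"
  by (metis sm_assoc sm_comm)
lemma sm_ac1: "a \<in> carrier M \<Longrightarrow> b \<in> carrier M \<Longrightarrow> c \<in> carrier M \<Longrightarrow> n \<in> carrier M \<Longrightarrow>
   add M (add M (add M a n) b) c = add M (add M (add M a b) c) n"
  by (metis sm_assoc sm_comm sm_add)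
end

lemma hom_closed: "semimod_hom M P h \<Longrightarrow> x \<in> carrier M \<Longrightarrow> h x \<in> carrier P"
  unfolding semimod_hom_def by blast
lemma hom_add: "semimod_hom M P h \<Longrightarrow> x \<in> carrier M \<Longrightarrow> y \<in> carrier M \<Longrightarrow> h (add M x y) = add P (h x) (h y)"
  unfolding semimod_hom_def by blast
lemma hom_smul: "semimod_hom M P h \<Longrightarrow> x \<in> carrier M \<Longrightarrow> h (smul M r x) = smul P r (h x)"
  unfolding semimod_hom_def by blast
lemma hom_zero: assumes M: "semimodule M" and P: "semimodule P" and h: "semimod_hom M P h"
  shows "h (zero M) = zero P"
proof -
  have z: "zero M \<in> carrier M" by (rule sm_zero[OF M])
  have "h (zero M) = h (smul M 0 (zero M))" using sm_szero[OF M z] by simp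
  also have "\<dots> = smul P 0 (h (zero M))" by (rule hom_smul[OF h z])
  also have "\<dots> = zero P" by (rule sm_szero[OF P hom_closed[OF h z]])
  finally show ?thesis .
qed

locale fgc =
  fixes N :: "('r::{semiring_0, monoid_mult}, 'n) semimod" and M :: "('r,'m) semimod"
    and f g :: "'n \<Rightarrow> 'm"
  assumes N: "semimodule N" and M: "semimodule M" and hf: "semimod_hom N M f" and hg: "semimod_hom N M g"
begin

abbreviation R where "R \<equiv> fg_rel N M f g"

lemma R_carrier: "(m, m') \<in> R \<Longrightarrow> m \<in> carrier M \<and> m' \<in> carrier M"
  unfolding fg_rel_def mem_Collect_eq case_prod_conv by (elim conjE) (intro conjI)

definition T where "T ms ns ns' (i::nat) = add M (add M (ms i) (f (ns i))) (g (ns' i))"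

definition chain where "chain (k::nat) ms ns ns' m m' \<longleftrightarrow> k \<ge> 1 \<and>
   (\<forall>i\<in>{1..k}. ms i \<in> carrier M \<and> ns i \<in> carrier N \<and> ns' i \<in> carrier N) \<and>
   m = T ms ns ns' 1 \<and> (\<forall>i\<in>{1..k-1}. T ms ns' ns i = T ms ns ns' (i+1)) \<and> T ms ns' ns k = m'"

lemma R_iff: "(m,m') \<in> R \<longleftrightarrow> m \<in> carrier M \<and> m' \<in> carrier M \<and> (\<exists>k ms ns ns'. chain k ms ns ns' m m')"
  unfolding fg_rel_def chain_def T_def
  apply (simp only: mem_Collect_eq case_prod_conv)
  apply (rule iffI)
   apply blast
  apply blast
  done

lemma chain_sym: assumes c: "chain k ms ns ns' m m'"
  shows "chain k (\<lambda>i. ms (k+1-i)) (\<lambda>i. ns' (k+1-i)) (\<lambda>i. ns (k+1-i)) m' m"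
proof -
  from c have k: "k \<ge> 1" and cl: "\<forall>i\<in>{1..k}. ms i \<in> carrier M \<and> ns i \<in> carrier N \<and> ns' i \<in> carrier N"
    and st: "m = T ms ns ns' 1" and ch: "\<forall>i\<in>{1..k-1}. T ms ns' ns i = T ms ns ns' (i+1)"
    and en: "T ms ns' ns k = m'" unfolding chain_def by auto
  have cl': "\<forall>i\<in>{1..k}. ms (k+1-i) \<in> carrier M \<and> ns' (k+1-i) \<in> carrier N \<and> ns (k+1-i) \<in> carrier N"
  proof
    fix i assume "i \<in> {1..k}"
    hence "k+1-i \<in> {1..k}" by auto
    thus "ms (k+1-i) \<in> carrier M \<and> ns' (k+1-i) \<in> carrier N \<and> ns (k+1-i) \<in> carrier N" using cl by blast
  qed
  have ch': "T (\<lambda>i. ms (k+1-i)) (\<lambda>i. ns (k+1-i)) (\<lambda>i. ns' (k+1-i)) i =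
             T (\<lambda>i. ms (k+1-i)) (\<lambda>i. ns' (k+1-i)) (\<lambda>i. ns (k+1-i)) (i+1)" if i: "i \<in> {1..k-1}" for i
  proof -
    have "k - i \<in> {1..k-1}" using i by auto
    with ch have "T ms ns' ns (k-i) = T ms ns ns' (k-i+1)" by blast
    moreover have e: "k + 1 - i = Suc (k - i)" using i by auto
    ultimately show ?thesis unfolding T_def by (simp add: e)
  qed
  have st': "m' = T (\<lambda>i. ms (k+1-i)) (\<lambda>i. ns' (k+1-i)) (\<lambda>i. ns (k+1-i)) 1"
    using en unfolding T_def by simp
  have en': "T (\<lambda>i. ms (k+1-i)) (\<lambda>i. ns (k+1-i)) (\<lambda>i. ns' (k+1-i)) k = m"
    using st k unfolding T_def by simp
  show ?thesis unfolding chain_def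
    apply (intro conjI)
        apply (rule k)
       apply (rule cl')
      apply (rule st')
     apply (intro ballI, erule ch')
    apply (rule en')
    done
qed

lemma R_sym: assumes "(m,m') \<in> R" shows "(m',m) \<in> R"
proof -
  from assms have "m \<in> carrier M \<and> m' \<in> carrier M \<and> (\<exists>k ms ns ns'. chain k ms ns ns' m m')"
    by (simp only: R_iff)
  then obtain k ms ns ns' where "m \<in> carrier M" "m' \<in> carrier M" "chain k ms ns ns' m m'"
    by (elim conjE exE)
  then have "m' \<in> carrier M \<and> m \<in> carrier M \<and> (\<exists>k ms ns ns'. chain k ms ns ns' m' m)"
    by (intro conjI exI) (auto intro: chain_sym)
  then show ?thesis by (simp only: R_iff)
qed

lemma chain_trans: assumes c1: "chain k ms ns ns' m m'" and c2: "chain l ms2 ns2 ns2' m' m''"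
  shows "chain (k+l) (\<lambda>i. if i \<le> k then ms i else ms2 (i-k)) (\<lambda>i. if i \<le> k then ns i else ns2 (i-k))
     (\<lambda>i. if i \<le> k then ns' i else ns2' (i-k)) m m''"
proof -
  from c1 have k: "k \<ge> 1" and cl: "\<forall>i\<in>{1..k}. ms i \<in> carrier M \<and> ns i \<in> carrier N \<and> ns' i \<in> carrier N"
    and st: "m = T ms ns ns' 1" and ch: "\<forall>i\<in>{1..k-1}. T ms ns' ns i = T ms ns ns' (i+1)"
    and en: "T ms ns' ns k = m'" unfolding chain_def by auto
  from c2 have l: "l \<ge> 1" and cl2: "\<forall>i\<in>{1..l}. ms2 i \<in> carrier M \<and> ns2 i \<in> carrier N \<and> ns2' i \<in> carrier N"
    and st2: "m' = T ms2 ns2 ns2' 1" and ch2: "\<forall>i\<in>{1..l-1}. T ms2 ns2' ns2 i = T ms2 ns2 ns2' (i+1)"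
    and en2: "T ms2 ns2' ns2 l = m''" unfolding chain_def by auto
  define A where "A = (\<lambda>i. if i \<le> k then ms i else ms2 (i-k))"
  define B where "B = (\<lambda>i. if i \<le> k then ns i else ns2 (i-k))"
  define C where "C = (\<lambda>i. if i \<le> k then ns' i else ns2' (i-k))"
  have cl': "\<forall>i\<in>{1..k+l}. A i \<in> carrier M \<and> B i \<in> carrier N \<and> C i \<in> carrier N"
  proof
    fix i assume i: "i \<in> {1..k+l}"
    show "A i \<in> carrier M \<and> B i \<in> carrier N \<and> C i \<in> carrier N"
    proof (cases "i \<le> k")
      case True then show ?thesis using cl i unfolding A_def B_def C_def by auto
    next
      case False then have "i - k \<in> {1..l}" using i by (simp; arith)
      then show ?thesis using cl2 False unfolding A_def B_def C_def by auto
    qed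
  qed
  have ch': "T A C B i = T A B C (i+1)" if i: "i \<in> {1..k+l-1}" for i
  proof -
    consider "i < k" | "i = k" | "i > k" by linarith
    then show ?thesis
    proof cases
      case 1 then have i1: "i \<in> {1..k-1}" using i by auto
      have "T A C B i = T ms ns' ns i" unfolding T_def A_def B_def C_def using 1 by simp
      also have "\<dots> = T ms ns ns' (i+1)" using ch i1 by blast
      also have "\<dots> = T A B C (i+1)" unfolding T_def A_def B_def C_def using 1 by simp
      finally show ?thesis .
    next
      case 2
      have "T A C B i = T ms ns' ns k" unfolding T_def A_def B_def C_def using 2 by simp
      also have "\<dots> = T ms2 ns2 ns2' 1" using en st2 by simp
      also have "\<dots> = T A B C (i+1)" unfolding T_def A_def B_def C_def using 2 by simp
      finally show ?thesis .
    next
      case 3 then have i3: "i - k \<in> {1..l-1}" using i by auto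
      have "T A C B i = T ms2 ns2' ns2 (i-k)" unfolding T_def A_def B_def C_def using 3 by simp
      also have "\<dots> = T ms2 ns2 ns2' (i-k+1)" using ch2 i3 by blast
      also have "\<dots> = T A B C (i+1)" unfolding T_def A_def B_def C_def using 3
        by (simp add: Suc_diff_le less_imp_le)
      finally show ?thesis .
    qed
  qed
  have st': "m = T A B C 1" using st k unfolding A_def B_def C_def T_def by auto
  have en': "T A C B (k+l) = m''" using en2 l unfolding A_def B_def C_def T_def by auto
  have kl: "1 \<le> k+l" using k by simp
  have "chain (k+l) A B C m m''" unfolding chain_def
    apply (intro conjI)
        apply (rule kl)
       apply (rule cl')
      apply (rule st')
     apply (intro ballI, erule ch')
    apply (rule en')
    done
  then show ?thesis unfolding A_def B_def C_def .
qed

lemma R_trans: assumes "(m,m') \<in> R" "(m',m'') \<in> R" shows "(m,m'') \<in> R"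
proof -
  from assms(1) have "m \<in> carrier M \<and> m' \<in> carrier M \<and> (\<exists>k ms ns ns'. chain k ms ns ns' m m')"
    by (simp only: R_iff)
  then obtain k ms ns ns' where a: "m \<in> carrier M" "chain k ms ns ns' m m'"
    by (elim conjE exE)
  from assms(2) have "m' \<in> carrier M \<and> m'' \<in> carrier M \<and> (\<exists>k ms ns ns'. chain k ms ns ns' m' m'')"
    by (simp only: R_iff)
  then obtain l ms2 ns2 ns2' where b: "m'' \<in> carrier M" "chain l ms2 ns2 ns2' m' m''"
    by (elim conjE exE)
  have "chain (k+l) (\<lambda>i. if i \<le> k then ms i else ms2 (i-k)) (\<lambda>i. if i \<le> k then ns i else ns2 (i-k))
     (\<lambda>i. if i \<le> k then ns' i else ns2' (i-k)) m m''" by (rule chain_trans[OF a(2) b(2)])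
  then have "m \<in> carrier M \<and> m'' \<in> carrier M \<and> (\<exists>k ms ns ns'. chain k ms ns ns' m m'')"
    using a(1) b(1) by (intro conjI exI) auto
  then show ?thesis by (simp only: R_iff)
qed

lemma R_refl: assumes m: "m \<in> carrier M" shows "(m, m) \<in> R"
proof -
  have f0: "f (zero N) = zero M" "g (zero N) = zero M" using hom_zero[OF N M hf] hom_zero[OF N M hg] by auto
  have e: "add M (add M m (f (zero N))) (g (zero N)) = m"
    using f0 m sm_rzero[OF M] by simp
  have "chain 1 (\<lambda>_. m) (\<lambda>_. zero N) (\<lambda>_. zero N) m m"
    unfolding chain_def T_def using e m sm_zero[OF N] by simp
  then show ?thesis unfolding R_iff using m by blast
qed

lemma R_fg: assumes x: "x \<in> carrier N" shows "(f x, g x) \<in> R"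
proof -
  have f0: "f (zero N) = zero M" "g (zero N) = zero M" using hom_zero[OF N M hf] hom_zero[OF N M hg] by auto
  have c: "f x \<in> carrier M" "g x \<in> carrier M" using hom_closed[OF hf x] hom_closed[OF hg x] by auto
  have e1: "f x = add M (add M (zero M) (f x)) (g (zero N))"
    using f0 c sm_rzero[OF M] sm_lzero[OF M] by simp
  have e2: "add M (add M (zero M) (f (zero N))) (g x) = g x"
    using f0 c sm_rzero[OF M] sm_lzero[OF M] sm_zero[OF M] by simp
  have "chain 1 (\<lambda>_. zero M) (\<lambda>_. x) (\<lambda>_. zero N) (f x) (g x)"
    unfolding chain_def T_def using e1 e2 x sm_zero[OF N] sm_zero[OF M] by simp
  then show ?thesis unfolding R_iff using c by blast
qed


lemma R_equiv: "equiv (carrier M) R"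
  unfolding equiv_def refl_on_def sym_def trans_def
  apply (intro conjI)
  subgoal using R_carrier by (auto simp: subset_iff)
  subgoal using R_refl by blast
  subgoal using R_sym by blast
  subgoal using R_trans by blast
  done


lemma T_add: assumes "ms i \<in> carrier M" "A i \<in> carrier N" "B i \<in> carrier N" "n \<in> carrier M"
  shows "T (\<lambda>j. add M (ms j) n) A B i = add M (T ms A B i) n"
  unfolding T_def using assms hom_closed[OF hf] hom_closed[OF hg] by (intro sm_ac1[OF M]) auto

lemma chain_add: assumes c: "chain k ms ns ns' m m'" and n: "n \<in> carrier M"
  shows "chain k (\<lambda>j. add M (ms j) n) ns ns' (add M m n) (add M m' n)"
proof -
  from c have k: "k \<ge> 1" and cl: "\<forall>i\<in>{1..k}. ms i \<in> carrier M \<and> ns i \<in> carrier N \<and> ns' i \<in> carrier N"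
    and st: "m = T ms ns ns' 1" and ch: "\<forall>i\<in>{1..k-1}. T ms ns' ns i = T ms ns ns' (i+1)"
    and en: "T ms ns' ns k = m'" unfolding chain_def by auto
  have cl': "\<forall>i\<in>{1..k}. add M (ms i) n \<in> carrier M \<and> ns i \<in> carrier N \<and> ns' i \<in> carrier N"
    using cl n sm_add[OF M] by blast
  have st': "add M m n = T (\<lambda>j. add M (ms j) n) ns ns' 1"
    using st T_add[of ms 1 ns ns' n] cl k n by simp
  have en': "T (\<lambda>j. add M (ms j) n) ns' ns k = add M m' n"
    using en T_add[of ms k ns' ns n] cl k n by simp
  have ch': "T (\<lambda>j. add M (ms j) n) ns' ns i = T (\<lambda>j. add M (ms j) n) ns ns' (i+1)" if i: "i \<in> {1..k-1}" for i
  proof -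
    have i1: "i \<in> {1..k}" "i+1 \<in> {1..k}" using i by auto
    have "T (\<lambda>j. add M (ms j) n) ns' ns i = add M (T ms ns' ns i) n"
      using T_add[of ms i ns' ns n] cl i1 n by simp
    also have "\<dots> = add M (T ms ns ns' (i+1)) n" using ch i by simp
    also have "\<dots> = T (\<lambda>j. add M (ms j) n) ns ns' (i+1)"
      using T_add[of ms "i+1" ns ns' n] cl i1 n by simp
    finally show ?thesis .
  qed
  show ?thesis unfolding chain_def
    apply (intro conjI)
        apply (rule k)
       apply (rule cl')
      apply (rule st')
     apply (intro ballI, erule ch')
    apply (rule en')
    done
qed

lemma T_smul: assumes "ms i \<in> carrier M" "A i \<in> carrier N" "B i \<in> carrier N"
  shows "T (\<lambda>j. smul M r (ms j)) (\<lambda>j. smul N r (A j)) (\<lambda>j. smul N r (B j)) i = smul M r (T ms A B i)"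
proof -
  have c: "f (A i) \<in> carrier M" "g (B i) \<in> carrier M" using assms hom_closed[OF hf] hom_closed[OF hg] by auto
  show ?thesis unfolding T_def
    using assms c hom_smul[OF hf] hom_smul[OF hg] sm_distr2[OF M] sm_add[OF M] by simp
qed

lemma chain_smul: assumes c: "chain k ms ns ns' m m'"
  shows "chain k (\<lambda>j. smul M r (ms j)) (\<lambda>j. smul N r (ns j)) (\<lambda>j. smul N r (ns' j)) (smul M r m) (smul M r m')"
proof -
  from c have k: "k \<ge> 1" and cl: "\<forall>i\<in>{1..k}. ms i \<in> carrier M \<and> ns i \<in> carrier N \<and> ns' i \<in> carrier N"
    and st: "m = T ms ns ns' 1" and ch: "\<forall>i\<in>{1..k-1}. T ms ns' ns i = T ms ns ns' (i+1)"
    and en: "T ms ns' ns k = m'" unfolding chain_def by auto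
  have cl': "\<forall>i\<in>{1..k}. smul M r (ms i) \<in> carrier M \<and> smul N r (ns i) \<in> carrier N \<and> smul N r (ns' i) \<in> carrier N"
    using cl sm_smul[OF M] sm_smul[OF N] by blast
  have st': "smul M r m = T (\<lambda>j. smul M r (ms j)) (\<lambda>j. smul N r (ns j)) (\<lambda>j. smul N r (ns' j)) 1"
    using st T_smul[of ms 1 ns ns' r] cl k by simp
  have en': "T (\<lambda>j. smul M r (ms j)) (\<lambda>j. smul N r (ns' j)) (\<lambda>j. smul N r (ns j)) k = smul M r m'"
    using en T_smul[of ms k ns' ns r] cl k by simp
  have ch': "T (\<lambda>j. smul M r (ms j)) (\<lambda>j. smul N r (ns' j)) (\<lambda>j. smul N r (ns j)) i =
     T (\<lambda>j. smul M r (ms j)) (\<lambda>j. smul N r (ns j)) (\<lambda>j. smul N r (ns' j)) (i+1)" if i: "i \<in> {1..k-1}" for i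
  proof -
    have i1: "i \<in> {1..k}" "i+1 \<in> {1..k}" using i by auto
    have "T (\<lambda>j. smul M r (ms j)) (\<lambda>j. smul N r (ns' j)) (\<lambda>j. smul N r (ns j)) i = smul M r (T ms ns' ns i)"
      using T_smul[of ms i ns' ns r] cl i1 by simp
    also have "\<dots> = smul M r (T ms ns ns' (i+1))" using ch i by simp
    also have "\<dots> = T (\<lambda>j. smul M r (ms j)) (\<lambda>j. smul N r (ns j)) (\<lambda>j. smul N r (ns' j)) (i+1)"
      using T_smul[of ms "i+1" ns ns' r] cl i1 by simp
    finally show ?thesis .
  qed
  show ?thesis unfolding chain_def
    apply (intro conjI)
        apply (rule k)
       apply (rule cl')
      apply (rule st')
     apply (intro ballI, erule ch')
    apply (rule en')
    done
qed

lemma R_add_right: assumes "(m,m') \<in> R" "n \<in> carrier M" shows "(add M m n, add M m' n) \<in> R"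
proof -
  from assms(1) have "m \<in> carrier M \<and> m' \<in> carrier M \<and> (\<exists>k ms ns ns'. chain k ms ns ns' m m')"
    by (simp only: R_iff)
  then obtain k ms ns ns' where a: "m \<in> carrier M" "m' \<in> carrier M" "chain k ms ns ns' m m'"
    by (elim conjE exE)
  have "chain k (\<lambda>j. add M (ms j) n) ns ns' (add M m n) (add M m' n)" by (rule chain_add[OF a(3) assms(2)])
  then have "add M m n \<in> carrier M \<and> add M m' n \<in> carrier M \<and> (\<exists>k ms ns ns'. chain k ms ns ns' (add M m n) (add M m' n))"
    using a(1,2) assms(2) sm_add[OF M] by (intro conjI exI) auto
  then show ?thesis by (simp only: R_iff)
qed

lemma R_smul: assumes "(m,m') \<in> R" shows "(smul M r m, smul M r m') \<in> R"
proof -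
  from assms(1) have "m \<in> carrier M \<and> m' \<in> carrier M \<and> (\<exists>k ms ns ns'. chain k ms ns ns' m m')"
    by (simp only: R_iff)
  then obtain k ms ns ns' where a: "m \<in> carrier M" "m' \<in> carrier M" "chain k ms ns ns' m m'"
    by (elim conjE exE)
  have "chain k (\<lambda>j. smul M r (ms j)) (\<lambda>j. smul N r (ns j)) (\<lambda>j. smul N r (ns' j)) (smul M r m) (smul M r m')"
    by (rule chain_smul[OF a(3)])
  then have "smul M r m \<in> carrier M \<and> smul M r m' \<in> carrier M \<and> (\<exists>k ms ns ns'. chain k ms ns ns' (smul M r m) (smul M r m'))"
    using a(1,2) sm_smul[OF M] by (intro conjI exI) auto
  then show ?thesis by (simp only: R_iff)
qed

lemma R_add: assumes "(a,a') \<in> R" "(b,b') \<in> R" shows "(add M a b, add M a' b') \<in> R"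
proof -
  have c: "a \<in> carrier M" "a' \<in> carrier M" "b \<in> carrier M" "b' \<in> carrier M"
    using R_carrier assms by auto
  have 1: "(add M a b, add M a' b) \<in> R" by (rule R_add_right[OF assms(1) c(3)])
  have "(add M b a', add M b' a') \<in> R" by (rule R_add_right[OF assms(2) c(2)])
  then have 2: "(add M a' b, add M a' b') \<in> R" using sm_comm[OF M] c by simp
  show ?thesis by (rule R_trans[OF 1 2])
qed

lemma R_inv:
  assumes P: "semimodule P" and h: "semimod_hom M P h" and hfg: "\<forall>x\<in>carrier N. h (f x) = h (g x)"
    and mm: "(m,m') \<in> R"
  shows "h m = h m'"
proof -
  from mm have "m \<in> carrier M \<and> m' \<in> carrier M \<and> (\<exists>k ms ns ns'. chain k ms ns ns' m m')"
    by (simp only: R_iff)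
  then obtain k ms ns ns' where c: "chain k ms ns ns' m m'"
    by (elim conjE exE)
  from c have k: "k \<ge> 1" and cl: "\<forall>i\<in>{1..k}. ms i \<in> carrier M \<and> ns i \<in> carrier N \<and> ns' i \<in> carrier N"
    and st: "m = T ms ns ns' 1" and ch: "\<forall>i\<in>{1..k-1}. T ms ns' ns i = T ms ns ns' (i+1)"
    and en: "T ms ns' ns k = m'" unfolding chain_def by auto
  have sw: "h (T ms ns' ns i) = h (T ms ns ns' i)" if i: "i \<in> {1..k}" for i
  proof -
    have a: "ms i \<in> carrier M" "ns i \<in> carrier N" "ns' i \<in> carrier N" using cl i by auto
    have b: "f (ns i) \<in> carrier M" "g (ns i) \<in> carrier M" "f (ns' i) \<in> carrier M" "g (ns' i) \<in> carrier M"
      using a hom_closed[OF hf] hom_closed[OF hg] by auto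
    have c: "h (ms i) \<in> carrier P" "h (f (ns i)) \<in> carrier P" "h (g (ns' i)) \<in> carrier P"
      using a b hom_closed[OF h] by auto
    have "h (T ms ns' ns i) = add P (add P (h (ms i)) (h (f (ns' i)))) (h (g (ns i)))"
      unfolding T_def using a b hom_add[OF h] sm_add[OF M] by simp
    also have "\<dots> = add P (add P (h (ms i)) (h (g (ns' i)))) (h (f (ns i)))"
      using hfg a by simp
    also have "\<dots> = add P (add P (h (ms i)) (h (f (ns i)))) (h (g (ns' i)))"
      by (rule sm_swap[OF P c(1) c(3) c(2)])
    also have "\<dots> = h (T ms ns ns' i)"
      unfolding T_def using a b hom_add[OF h] sm_add[OF M] by simp
    finally show ?thesis .
  qed
  have ind: "Suc j \<le> k \<longrightarrow> h (T ms ns ns' (Suc j)) = h m" for j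
  proof (induction j)
    case 0 then show ?case using st by simp
  next
    case (Suc j)
    show ?case
    proof
      assume j: "Suc (Suc j) \<le> k"
      have j1: "Suc j \<in> {1..k-1}" "Suc j \<in> {1..k}" using j k by auto
      have "h (T ms ns ns' (Suc (Suc j))) = h (T ms ns' ns (Suc j))" using ch j1 by simp
      also have "\<dots> = h (T ms ns ns' (Suc j))" using sw j1 by blast
      also have "\<dots> = h m" using Suc.IH j by simp
      finally show "h (T ms ns ns' (Suc (Suc j))) = h m" .
    qed
  qed
  have kk: "k = Suc (k - 1)" "k \<in> {1..k}" using k by auto
  have "h m' = h (T ms ns' ns k)" using en by simp
  also have "\<dots> = h (T ms ns ns' k)" using sw kk by blast
  also have "\<dots> = h m" using ind[of "k-1"] kk by simp
  finally show ?thesis by simp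
qed

abbreviation Q where "Q \<equiv> quot_semimod M R"
abbreviation nu where "nu \<equiv> quot_map R"

lemma nu_self: "m \<in> carrier M \<Longrightarrow> m \<in> nu m"
  unfolding quot_map_def using R_refl by blast

lemma nu_eq: "(a, b) \<in> R \<Longrightarrow> nu a = nu b"
  unfolding quot_map_def by (rule equiv_class_eq[OF R_equiv])

lemma nu_mem: "x \<in> nu a \<Longrightarrow> (a, x) \<in> R"
  unfolding quot_map_def by blast

lemma Q_carrier: "carrier Q = carrier M // R" unfolding quot_semimod_def by simp

lemma nu_in: "m \<in> carrier M \<Longrightarrow> nu m \<in> carrier Q"
  unfolding Q_carrier quot_map_def by (rule quotientI)

lemma Q_cases: assumes "X \<in> carrier Q" obtains m where "m \<in> carrier M" "X = nu m"
  using assms unfolding Q_carrier quot_map_def by (elim quotientE) blast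

lemma Q_zero: "zero Q = nu (zero M)" unfolding quot_semimod_def quot_map_def by simp

lemma Q_add: assumes a: "a \<in> carrier M" and b: "b \<in> carrier M"
  shows "add Q (nu a) (nu b) = nu (add M a b)"
proof -
  have "add Q (nu a) (nu b) = (SOME Z. \<exists>x\<in>nu a. \<exists>y\<in>nu b. Z = R `` {add M x y})"
    unfolding quot_semimod_def by simp
  also have "\<dots> = nu (add M a b)"
  proof (rule someI2)
    show "\<exists>x\<in>nu a. \<exists>y\<in>nu b. nu (add M a b) = R `` {add M x y}"
      using nu_self[OF a] nu_self[OF b] unfolding quot_map_def by blast
  next
    fix Z assume "\<exists>x\<in>nu a. \<exists>y\<in>nu b. Z = R `` {add M x y}"
    then obtain x y where x: "x \<in> nu a" and y: "y \<in> nu b" and Z: "Z = R `` {add M x y}" by blast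
    have "(add M a b, add M x y) \<in> R" using R_add nu_mem[OF x] nu_mem[OF y] by blast
    then show "Z = nu (add M a b)" using Z nu_eq unfolding quot_map_def by metis
  qed
  finally show ?thesis .
qed

lemma Q_smul: assumes a: "a \<in> carrier M"
  shows "smul Q r (nu a) = nu (smul M r a)"
proof -
  have "smul Q r (nu a) = (SOME Z. \<exists>x\<in>nu a. Z = R `` {smul M r x})"
    unfolding quot_semimod_def by simp
  also have "\<dots> = nu (smul M r a)"
  proof (rule someI2)
    show "\<exists>x\<in>nu a. nu (smul M r a) = R `` {smul M r x}"
      using nu_self[OF a] unfolding quot_map_def by blast
  next
    fix Z assume "\<exists>x\<in>nu a. Z = R `` {smul M r x}"
    then obtain x where x: "x \<in> nu a" and Z: "Z = R `` {smul M r x}" by blast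
    have "(smul M r a, smul M r x) \<in> R" using R_smul nu_mem[OF x] by blast
    then show "Z = nu (smul M r a)" using Z nu_eq unfolding quot_map_def by metis
  qed
  finally show ?thesis .
qed


lemma Q_semimodule: "semimodule Q"
  unfolding semimodule_def
proof (intro conjI ballI allI)
  note Mz = sm_zero[OF M] and Ma = sm_add[OF M] and Ms = sm_smul[OF M]
  show "zero Q \<in> carrier Q" using Q_zero nu_in Mz by simp
  show "add Q X Y \<in> carrier Q" if "X \<in> carrier Q" "Y \<in> carrier Q" for X Y
    using that by (elim Q_cases) (simp add: Q_add nu_in Ma)
  show "smul Q r X \<in> carrier Q" if "X \<in> carrier Q" for r X
    using that by (elim Q_cases) (simp add: Q_smul nu_in Ms)
  show "add Q (add Q X Y) Z = add Q X (add Q Y Z)" if "X \<in> carrier Q" "Y \<in> carrier Q" "Z \<in> carrier Q" for X Y Z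
    using that by (elim Q_cases) (simp add: Q_add Ma sm_assoc[OF M])
  show "add Q X Y = add Q Y X" if "X \<in> carrier Q" "Y \<in> carrier Q" for X Y
    using that by (elim Q_cases) (simp add: Q_add sm_comm[OF M])
  show "add Q (zero Q) X = X" if "X \<in> carrier Q" for X
    using that by (elim Q_cases) (simp add: Q_add Q_zero Mz sm_lzero[OF M])
  show "smul Q (r * r') X = smul Q r (smul Q r' X)" if "X \<in> carrier Q" for r r' X
    using that by (elim Q_cases) (simp add: Q_smul Ms sm_mult[OF M])
  show "smul Q (r + r') X = add Q (smul Q r X) (smul Q r' X)" if "X \<in> carrier Q" for r r' X
    using that by (elim Q_cases) (simp add: Q_smul Q_add Ms sm_distr1[OF M])
  show "smul Q r (add Q X Y) = add Q (smul Q r X) (smul Q r Y)" if "X \<in> carrier Q" "Y \<in> carrier Q" for r X Y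
    using that by (elim Q_cases) (simp add: Q_smul Q_add Ms Ma sm_distr2[OF M])
  show "smul Q 1 X = X" if "X \<in> carrier Q" for X
    using that by (elim Q_cases) (simp add: Q_smul sm_one[OF M])
  show "smul Q 0 X = zero Q" if "X \<in> carrier Q" for X
    using that by (elim Q_cases) (simp add: Q_smul Q_zero sm_szero[OF M])
  show "smul Q r (zero Q) = zero Q" for r
    by (simp add: Q_smul Q_zero Mz sm_zeros[OF M])
qed

lemma nu_hom: "semimod_hom M Q nu"
  unfolding semimod_hom_def using nu_in Q_add Q_smul by simp

lemma nu_fg: "\<forall>x\<in>carrier N. nu (f x) = nu (g x)"
  using R_fg nu_eq by blast

lemma universal:
  assumes P: "semimodule P" and h: "semimod_hom M P h" and hfg: "\<forall>x\<in>carrier N. h (f x) = h (g x)"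
  shows "\<exists>h'. semimod_hom Q P h' \<and> (\<forall>m\<in>carrier M. h' (nu m) = h m) \<and>
                (\<forall>h''. semimod_hom Q P h'' \<and> (\<forall>m\<in>carrier M. h'' (nu m) = h m) \<longrightarrow>
                       (\<forall>X\<in>carrier Q. h'' X = h' X))"
proof -
  define h' where "h' = (\<lambda>X. h (SOME x. x \<in> X))"
  have hn: "h' (nu m) = h m" if m: "m \<in> carrier M" for m
  proof -
    have "(SOME x. x \<in> nu m) \<in> nu m" using nu_self[OF m] by (rule someI)
    then have "(m, SOME x. x \<in> nu m) \<in> R" by (rule nu_mem)
    then show ?thesis unfolding h'_def using R_inv[OF P h hfg] by metis
  qed
  have hom: "semimod_hom Q P h'"
    unfolding semimod_hom_def
  proof (intro conjI ballI allI)
    show "h' X \<in> carrier P" if "X \<in> carrier Q" for X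
      using that by (elim Q_cases) (simp add: hn hom_closed[OF h])
    show "h' (add Q X Y) = add P (h' X) (h' Y)" if "X \<in> carrier Q" "Y \<in> carrier Q" for X Y
      using that by (elim Q_cases) (simp add: hn Q_add sm_add[OF M] hom_add[OF h])
    show "h' (smul Q r X) = smul P r (h' X)" if "X \<in> carrier Q" for r X
      using that by (elim Q_cases) (simp add: hn Q_smul sm_smul[OF M] hom_smul[OF h])
  qed
  show ?thesis
  proof (intro exI conjI allI impI ballI)
    show "semimod_hom Q P h'" by (rule hom)
    show "h' (nu m) = h m" if "m \<in> carrier M" for m using hn that .
    fix h'' X assume a: "semimod_hom Q P h'' \<and> (\<forall>m\<in>carrier M. h'' (nu m) = h m)" and X: "X \<in> carrier Q"
    from X show "h'' X = h' X" by (elim Q_cases) (simp add: a hn)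
  qed
qed

end

theorem theorem2p13:
  fixes N :: "('r::{semiring_0, monoid_mult}, 'n) semimod"
    and M :: "('r, 'm) semimod"
    and f g :: "'n \<Rightarrow> 'm"
  assumes "semimodule N" and "semimodule M"
    and "semimod_hom N M f" and "semimod_hom N M g"
  defines "Q \<equiv> quot_semimod M (fg_rel N M f g)"
    and "\<nu> \<equiv> quot_map (fg_rel N M f g)"
  shows "semimodule Q \<and> semimod_hom M Q \<nu>
    \<and> (\<forall>x\<in>carrier N. \<nu> (f x) = \<nu> (g x))
    \<and> (\<forall>(P :: ('r, 'p) semimod) h. semimodule P \<longrightarrow> semimod_hom M P h \<longrightarrow>
          (\<forall>x\<in>carrier N. h (f x) = h (g x)) \<longrightarrow>
          (\<exists>h'. semimod_hom Q P h' \<and> (\<forall>m\<in>carrier M. h' (\<nu> m) = h m) \<and>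
                (\<forall>h''. semimod_hom Q P h'' \<and> (\<forall>m\<in>carrier M. h'' (\<nu> m) = h m) \<longrightarrow>
                       (\<forall>X\<in>carrier Q. h'' X = h' X))))"
proof -
  interpret fgc N M f g using assms(1-4) by unfold_locales
  show ?thesis unfolding Q_def \<nu>_def
    using Q_semimodule nu_hom nu_fg universal by blast
qed

end
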